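(* Let $r\ge2$, $e\ge1$ and $p'$ be integers with $0\le p'\le\frac{(r+1)e}{2}$. Then there exists an integer $p$ with $0\le p\le\frac{re}{2}$ such that the polynomial $$\Bigl\{\Omega^{2p'}\,(\underline{x}\,\underline{y})^{2p}\,a_{\underline{x}}^{re-2p}\,a_{\underline{y}}^{re-2p}\,b_{\underline{x}}^{e}\,b_{\underline{y}}^{e}\Bigr\}\Big|_{\underline{y}:=\underline{x}}$$ in the variables $a_0,a_1,b_0,b_1,x_0,x_1$ is not identically zero.
   Context: $\underline{x}=(x_0,x_1)$, $\underline{y}=(y_0,y_1)$, $a=(a_0,a_1)$, $b=(b_0,b_1)$ are pairs of indeterminates; $a_{\underline{x}}=a_0x_0+a_1x_1$, $a_{\underline{y}}=a_0y_0+a_1y_1$, similarly for $b$; $(\underline{x}\,\underline{y})=x_0y_1-x_1y_0$; $\Omega=\frac{\partial^2}{\partial x_0\partial y_1}-\frac{\partial^2}{\partial x_1\partial y_0}$; and $|_{\underline{y}:=\underline{x}}$ means substituting $y_i=x_i$ after differentiation. *)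

theory Defs
  imports "HOL-Analysis.Analysis"
begin

text \<open>Polynomials are represented
  by the real polynomial functions they induce (over a field of characteristic 0 a
  polynomial is zero iff its function is zero).\<close>
datatype var = A0 | A1 | B0 | B1 | X0 | X1 | Y0 | Y1

type_synonym pfun = "(var \<Rightarrow> real) \<Rightarrow> real"

definition pd :: "var \<Rightarrow> pfun \<Rightarrow> pfun" where
  "pd v f = (\<lambda>q. deriv (\<lambda>t. f (q(v := t))) (q v))"

definition Omega :: "pfun \<Rightarrow> pfun" where
  "Omega f = (\<lambda>q. pd X0 (pd Y1 f) q - pd X1 (pd Y0 f) q)"

definition bracket_xy :: pfun where
  "bracket_xy = (\<lambda>q. q X0 * q Y1 - q X1 * q Y0)"

definition a_x :: pfun where "a_x = (\<lambda>q. q A0 * q X0 + q A1 * q X1)"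
definition a_y :: pfun where "a_y = (\<lambda>q. q A0 * q Y0 + q A1 * q Y1)"
definition b_x :: pfun where "b_x = (\<lambda>q. q B0 * q X0 + q B1 * q X1)"
definition b_y :: pfun where "b_y = (\<lambda>q. q B0 * q Y0 + q B1 * q Y1)"

text \<open>(xy)^(2p) a_x^(re-2p) a_y^(re-2p) b_x^e b_y^e (used only when 2p \<le> re)\<close>
definition Fpoly :: "nat \<Rightarrow> nat \<Rightarrow> nat \<Rightarrow> pfun" where
  "Fpoly r e p = (\<lambda>q. bracket_xy q ^ (2*p) * a_x q ^ (r*e - 2*p) * a_y q ^ (r*e - 2*p)
                      * b_x q ^ e * b_y q ^ e)"

end

theory Submission
  imports Defs
begin

inductive_set PP :: "pfun set" where
  PP_const: "(\<lambda>q. c) \<in> PP"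
| PP_var: "(\<lambda>q. q v) \<in> PP"
| PP_add: "f \<in> PP \<Longrightarrow> g \<in> PP \<Longrightarrow> (\<lambda>q. f q + g q) \<in> PP"
| PP_mult: "f \<in> PP \<Longrightarrow> g \<in> PP \<Longrightarrow> (\<lambda>q. f q * g q) \<in> PP"

lemma pd_eq:
  assumes "((\<lambda>t. f (q(v := t))) has_real_derivative D) (at (q v))"
  shows "pd v f q = D"
  unfolding pd_def using DERIV_imp_deriv[OF assms] .

lemma pd_has:
  assumes "f \<in> PP"
  shows "((\<lambda>t. f (q(v := t))) has_real_derivative pd v f q) (at (q v))"
  using assms
proof induction
  case (PP_const c)
  have h: "((\<lambda>t. c) has_real_derivative 0) (at (q v))" by simp
  have e: "pd v (\<lambda>q. c) q = 0" by (rule pd_eq) (use h in simp)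
  show ?case unfolding e by (rule h)
next
  case (PP_var w)
  show ?case
  proof (cases "v = w")
    case True
    have h: "((\<lambda>t. (q(v := t)) w) has_real_derivative 1) (at (q v))"
      using True by (simp add: DERIV_ident)
    have e: "pd v (\<lambda>q. q w) q = 1" by (rule pd_eq) (use h in simp)
    show ?thesis unfolding e by (rule h)
  next
    case False
    have h: "((\<lambda>t. (q(v := t)) w) has_real_derivative 0) (at (q v))"
      using False by simp
    have e: "pd v (\<lambda>q. q w) q = 0" by (rule pd_eq) (use h in simp)
    show ?thesis unfolding e by (rule h)
  qed
next
  case (PP_add f g)
  have h: "((\<lambda>t. f (q(v := t)) + g (q(v := t))) has_real_derivative pd v f q + pd v g q) (at (q v))"
    using PP_add by (intro DERIV_add)
  have e: "pd v (\<lambda>q. f q + g q) q = pd v f q + pd v g q" by (rule pd_eq) (use h in simp)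
  show ?case unfolding e by (rule h)
next
  case (PP_mult f g)
  have h: "((\<lambda>t. f (q(v := t)) * g (q(v := t))) has_real_derivative pd v f q * g q + f q * pd v g q) (at (q v))"
    by (rule DERIV_cong[OF DERIV_mult[OF PP_mult.IH]]) (simp add: mult.commute)
  have e: "pd v (\<lambda>q. f q * g q) q = pd v f q * g q + f q * pd v g q" by (rule pd_eq) (use h in simp)
  show ?case unfolding e by (rule h)
qed

lemma pd_const[simp]: "pd v (\<lambda>q. c) = (\<lambda>q. 0)"
  by (rule ext, rule pd_eq, simp)

lemma pd_var[simp]: "pd v (\<lambda>q. q w) = (\<lambda>q. if v = w then 1 else 0)"
  by (rule ext, rule pd_eq, auto simp: DERIV_ident)

lemma pd_add:
  assumes "f \<in> PP" "g \<in> PP"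
  shows "pd v (\<lambda>q. f q + g q) = (\<lambda>q. pd v f q + pd v g q)"
  apply (rule ext)
  subgoal for q by (rule pd_eq) (use DERIV_add[OF pd_has[OF assms(1), of q v] pd_has[OF assms(2), of q v]] in simp)
  done

lemma pd_mult:
  assumes "f \<in> PP" "g \<in> PP"
  shows "pd v (\<lambda>q. f q * g q) = (\<lambda>q. pd v f q * g q + f q * pd v g q)"
  apply (rule ext)
  subgoal for q by (rule pd_eq, rule DERIV_cong[OF DERIV_mult[OF pd_has[OF assms(1), of q v] pd_has[OF assms(2), of q v]]]) (simp add: mult.commute)
  done

lemma PP_cmult: "f \<in> PP \<Longrightarrow> (\<lambda>q. c * f q) \<in> PP"
  using PP_mult[OF PP_const] by blast

lemma PP_diff: "f \<in> PP \<Longrightarrow> g \<in> PP \<Longrightarrow> (\<lambda>q. f q - g q) \<in> PP"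
  using PP_add[OF _ PP_cmult[of g "-1"]] by simp

lemma PP_pow: "f \<in> PP \<Longrightarrow> (\<lambda>q. f q ^ n) \<in> PP"
  by (induction n) (auto intro: PP_const PP_mult)

lemma PP_sum: "(\<And>i. i \<in> A \<Longrightarrow> f i \<in> PP) \<Longrightarrow> (\<lambda>q. \<Sum>i\<in>A. f i q) \<in> PP"
  by (induction A rule: infinite_finite_induct) (auto intro: PP_const PP_add)

lemma pd_cmult:
  assumes "f \<in> PP"
  shows "pd v (\<lambda>q. c * f q) = (\<lambda>q. c * pd v f q)"
  using pd_mult[OF PP_const assms, of v c] by simp

lemma pd_diff:
  assumes "f \<in> PP" "g \<in> PP"
  shows "pd v (\<lambda>q. f q - g q) = (\<lambda>q. pd v f q - pd v g q)"
proof -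
  have "pd v (\<lambda>q. f q - g q) = pd v (\<lambda>q. f q + (-1) * g q)" by simp
  also have "\<dots> = (\<lambda>q. pd v f q + pd v (\<lambda>q. (-1) * g q) q)"
    by (rule pd_add[OF assms(1) PP_cmult[OF assms(2)]])
  also have "\<dots> = (\<lambda>q. pd v f q - pd v g q)" using pd_cmult[OF assms(2), of v "-1"] by simp
  finally show ?thesis .
qed

lemma pd_sum:
  assumes "\<And>i. i \<in> A \<Longrightarrow> f i \<in> PP"
  shows "pd v (\<lambda>q. \<Sum>i\<in>A. f i q) = (\<lambda>q. \<Sum>i\<in>A. pd v (f i) q)"
  using assms
proof (induction A rule: infinite_finite_induct)
  case (insert x F)
  have "pd v (\<lambda>q. \<Sum>i\<in>insert x F. f i q) = pd v (\<lambda>q. f x q + (\<Sum>i\<in>F. f i q))"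
    using insert by simp
  also have "\<dots> = (\<lambda>q. pd v (f x) q + pd v (\<lambda>q. \<Sum>i\<in>F. f i q) q)"
    by (rule pd_add) (use insert in \<open>auto intro: PP_sum\<close>)
  finally show ?case using insert by simp
qed auto

lemma pd_PP: "f \<in> PP \<Longrightarrow> pd v f \<in> PP"
proof (induction rule: PP.induct)
  case (PP_add f g) then show ?case by (simp add: pd_add PP.intros)
next
  case (PP_mult f g) then show ?case by (simp add: pd_mult PP.intros)
qed (auto intro: PP.intros)

lemma pd_comm: "f \<in> PP \<Longrightarrow> pd v (pd w f) = pd w (pd v f)"
proof (induction rule: PP.induct)
  case (PP_add f g) then show ?case by (simp add: pd_add PP.intros pd_PP)
next
  case (PP_mult f g)
  show ?case
    using PP_mult
    by (simp add: pd_mult pd_add PP.intros pd_PP algebra_simps)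
qed auto

lemmas PP_simps[simp] = PP_const PP_var PP_add PP_mult PP_cmult PP_diff PP_pow pd_PP

lemma PP_neg[simp]: "f \<in> PP \<Longrightarrow> (\<lambda>q. - f q) \<in> PP"
  using PP_cmult[of f "-1"] by simp

lemma pd_neg[simp]: "f \<in> PP \<Longrightarrow> pd v (\<lambda>q. - f q) = (\<lambda>q. - pd v f q)"
  using pd_cmult[of f v "-1"] by simp

lemma Omega_PP[simp]: "f \<in> PP \<Longrightarrow> Omega f \<in> PP"
  unfolding Omega_def by simp

lemma funpow_PP[simp]: "f \<in> PP \<Longrightarrow> (Omega ^^ n) f \<in> PP"
  by (induction n) auto

lemma Omega_add:
  "f \<in> PP \<Longrightarrow> g \<in> PP \<Longrightarrow> Omega (\<lambda>q. f q + g q) = (\<lambda>q. Omega f q + Omega g q)"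
  unfolding Omega_def by (simp add: pd_add algebra_simps)

lemma Omega_cmult:
  "f \<in> PP \<Longrightarrow> Omega (\<lambda>q. c * f q) = (\<lambda>q. c * Omega f q)"
  unfolding Omega_def by (simp add: pd_cmult algebra_simps)

lemma Omega_lin:
  "f \<in> PP \<Longrightarrow> g \<in> PP \<Longrightarrow> Omega (\<lambda>q. c * f q + g q) = (\<lambda>q. c * Omega f q + Omega g q)"
  by (simp add: Omega_add Omega_cmult)

lemma funpow_lin:
  "f \<in> PP \<Longrightarrow> g \<in> PP \<Longrightarrow> (Omega ^^ n) (\<lambda>q. c * f q + g q) = (\<lambda>q. c * (Omega ^^ n) f q + (Omega ^^ n) g q)"
  by (induction n) (simp_all add: Omega_lin)

lemma Omega_sum:
  assumes "\<And>i. i \<in> A \<Longrightarrow> f i \<in> PP"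
  shows "Omega (\<lambda>q. \<Sum>i\<in>A. c i * f i q) = (\<lambda>q. \<Sum>i\<in>A. c i * Omega (f i) q)"
proof -
  have "\<And>i v. i \<in> A \<Longrightarrow> (\<lambda>q. c i * pd v (f i) q) \<in> PP" using assms by simp
  then show ?thesis
    unfolding Omega_def using assms
    by (simp add: pd_sum pd_cmult sum_subtractf algebra_simps)
qed

lemma Omega_mult:
  assumes "f \<in> PP" "g \<in> PP"
  shows "Omega (\<lambda>q. f q * g q) = (\<lambda>q. Omega f q * g q + f q * Omega g q
     + pd X0 f q * pd Y1 g q + pd Y1 f q * pd X0 g q - pd X1 f q * pd Y0 g q - pd Y0 f q * pd X1 g q)"
  unfolding Omega_def using assms by (simp add: pd_mult pd_add algebra_simps)

definition Eu :: "pfun \<Rightarrow> pfun" where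
  "Eu f = (\<lambda>q. q X0 * pd X0 f q + q X1 * pd X1 f q + q Y0 * pd Y0 f q + q Y1 * pd Y1 f q)"

lemma Eu_PP[simp]: "f \<in> PP \<Longrightarrow> Eu f \<in> PP"
  unfolding Eu_def by simp

lemma Eu_mult:
  assumes "f \<in> PP" "g \<in> PP"
  shows "Eu (\<lambda>q. f q * g q) = (\<lambda>q. Eu f q * g q + f q * Eu g q)"
  unfolding Eu_def using assms by (simp add: pd_mult algebra_simps)

lemma Eu_pow:
  assumes "f \<in> PP" "Eu f = (\<lambda>q. c * f q)"
  shows "Eu (\<lambda>q. f q ^ n) = (\<lambda>q. (real n * c) * f q ^ n)"
proof (induction n)
  case 0
  then show ?case unfolding Eu_def by simp
next
  case (Suc n)
  have "Eu (\<lambda>q. f q ^ Suc n) = Eu (\<lambda>q. f q * f q ^ n)" by simp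
  also have "\<dots> = (\<lambda>q. Eu f q * f q ^ n + f q * Eu (\<lambda>q. f q ^ n) q)"
    using assms by (simp add: Eu_mult)
  finally show ?case using Suc assms(2) by (simp add: algebra_simps)
qed

lemma pd_Eu:
  assumes "f \<in> PP" "v \<in> {X0, X1, Y0, Y1}"
  shows "pd v (Eu f) = (\<lambda>q. pd v f q + Eu (pd v f) q)"
  using assms unfolding Eu_def
  by (auto simp: pd_add pd_mult pd_comm[of f v])

lemma Omega_Eu:
  assumes "f \<in> PP"
  shows "Omega (Eu f) = (\<lambda>q. 2 * Omega f q + Eu (Omega f) q)"
proof -
  have a: "pd X0 (pd Y1 (Eu f)) = (\<lambda>q. 2 * pd X0 (pd Y1 f) q + Eu (pd X0 (pd Y1 f)) q)"
    using assms by (simp add: pd_Eu pd_add)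
  have b: "pd X1 (pd Y0 (Eu f)) = (\<lambda>q. 2 * pd X1 (pd Y0 f) q + Eu (pd X1 (pd Y0 f)) q)"
    using assms by (simp add: pd_Eu pd_add)
  have c: "Eu (Omega f) = (\<lambda>q. Eu (pd X0 (pd Y1 f)) q - Eu (pd X1 (pd Y0 f)) q)"
    unfolding Omega_def Eu_def using assms by (simp add: pd_diff algebra_simps)
  show ?thesis unfolding Omega_def[of "Eu f"] a b c by (simp add: Omega_def algebra_simps)
qed

lemma Eu_Omega_hom:
  assumes "f \<in> PP" "Eu f = (\<lambda>q. D * f q)"
  shows "Eu (Omega f) = (\<lambda>q. (D - 2) * Omega f q)"
proof -
  have "Omega (Eu f) = (\<lambda>q. D * Omega f q)" using assms by (simp add: Omega_cmult)
  with Omega_Eu[OF assms(1)] have "\<And>q. 2 * Omega f q + Eu (Omega f) q = D * Omega f q"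
    by metis
  then show ?thesis by (auto simp: algebra_simps)
qed

lemma br_PP[simp]: "bracket_xy \<in> PP"
  unfolding bracket_xy_def by simp

lemma pd_br:
  "pd X0 bracket_xy = (\<lambda>q. q Y1)" "pd X1 bracket_xy = (\<lambda>q. - q Y0)"
  "pd Y0 bracket_xy = (\<lambda>q. - q X1)" "pd Y1 bracket_xy = (\<lambda>q. q X0)"
  unfolding bracket_xy_def by (simp_all add: pd_diff pd_mult)

lemma Omega_br: "Omega bracket_xy = (\<lambda>q. 2)"
  unfolding Omega_def by (simp add: pd_br)

lemma Eu_br: "Eu bracket_xy = (\<lambda>q. 2 * bracket_xy q)"
  unfolding Eu_def pd_br by (simp add: bracket_xy_def algebra_simps)

lemma Omega_br_mult:
  assumes "Y \<in> PP"
  shows "Omega (\<lambda>q. bracket_xy q * Y q) = (\<lambda>q. 2 * Y q + Eu Y q + bracket_xy q * Omega Y q)"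
  using assms by (simp add: Omega_mult Omega_br pd_br Eu_def algebra_simps)

abbreviation br where "br \<equiv> bracket_xy"

lemma Eu_brpow: "Eu (\<lambda>q. br q ^ n) = (\<lambda>q. (real n * 2) * br q ^ n)"
  by (rule Eu_pow[OF br_PP Eu_br])

lemma Omega_brpow:
  assumes Y: "Y \<in> PP"
  shows "Omega (\<lambda>q. br q ^ Suc b * Y q) = (\<lambda>q. br q ^ b * (real (Suc b) * real (Suc b + 1) * Y q
            + real (Suc b) * Eu Y q) + br q ^ Suc b * Omega Y q)"
proof (induction b)
  case 0
  show ?case using Omega_br_mult[OF Y] by (simp add: algebra_simps)
next
  case (Suc b)
  define Z where "Z = (\<lambda>q. br q ^ Suc b * Y q)"
  have Z: "Z \<in> PP" unfolding Z_def using Y by simp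
  have e1: "(\<lambda>q. br q ^ Suc (Suc b) * Y q) = (\<lambda>q. br q * Z q)"
    unfolding Z_def by (simp add: algebra_simps)
  have e2: "Eu Z = (\<lambda>q. (real (Suc b) * 2) * br q ^ Suc b * Y q + br q ^ Suc b * Eu Y q)"
    unfolding Z_def Eu_mult[OF PP_pow[OF br_PP] Y] Eu_brpow by (rule ext) (simp add: algebra_simps)
  have e3: "Omega Z = (\<lambda>q. br q ^ b * (real (Suc b) * real (Suc b + 1) * Y q
            + real (Suc b) * Eu Y q) + br q ^ Suc b * Omega Y q)"
    unfolding Z_def by (rule Suc.IH)
  show ?case unfolding e1 Omega_br_mult[OF Z] e2 e3
    by (rule ext) (simp add: Z_def algebra_simps)
qed

lemma Omega_brpow_ex:
  assumes Y: "Y \<in> PP"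
  shows "\<exists>Y'\<in>PP. Omega (\<lambda>q. br q ^ Suc b * Y q) = (\<lambda>q. br q ^ b * Y' q)"
  apply (rule bexI[of _ "\<lambda>q. real (Suc b) * real (Suc b + 1) * Y q
            + real (Suc b) * Eu Y q + br q * Omega Y q"])
  using Y unfolding Omega_brpow[OF Y] by (auto intro!: ext simp: algebra_simps)

lemma Omega_brpow_hom:
  assumes Y: "Y \<in> PP" and hom: "Eu Y = (\<lambda>q. D * Y q)"
  shows "Omega (\<lambda>q. br q ^ Suc b * Y q) = (\<lambda>q. (real (Suc b) * (real (Suc b) + 1 + D)) * (br q ^ b * Y q)
            + br q ^ Suc b * Omega Y q)"
  unfolding Omega_brpow[OF Y] hom by (rule ext) (simp add: algebra_simps)

definition diag :: "(var \<Rightarrow> real) \<Rightarrow> bool" where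
  "diag q \<longleftrightarrow> q Y0 = q X0 \<and> q Y1 = q X1"

lemma br_diag: "diag q \<Longrightarrow> br q = 0"
  unfolding diag_def bracket_xy_def by (simp add: algebra_simps)

lemma lemmaC:
  "Y \<in> PP \<Longrightarrow> a < b \<Longrightarrow> diag q \<Longrightarrow> (Omega ^^ a) (\<lambda>q. br q ^ b * Y q) q = 0"
proof (induction a arbitrary: b Y)
  case 0
  then show ?case by (simp add: br_diag)
next
  case (Suc a)
  then obtain b' where b: "b = Suc b'" by (cases b) auto
  obtain Y' where Y': "Y' \<in> PP" "Omega (\<lambda>q. br q ^ Suc b' * Y q) = (\<lambda>q. br q ^ b' * Y' q)"
    using Omega_brpow_ex[OF Suc.prems(1)] by blast
  have "(Omega ^^ Suc a) (\<lambda>q. br q ^ b * Y q) = (Omega ^^ a) (\<lambda>q. br q ^ b' * Y' q)"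
    unfolding b funpow_Suc_right comp_def Y'(2) ..
  then show ?case using Suc.IH[OF Y'(1)] Suc.prems b by simp
qed

lemma lemmaB:
  "X \<in> PP \<Longrightarrow> Eu X = (\<lambda>q. D * X q) \<Longrightarrow> b \<le> a \<Longrightarrow> 2 * real (a - b) \<le> D \<Longrightarrow>
   \<exists>c>0. \<forall>q. diag q \<longrightarrow> (Omega ^^ a) (\<lambda>q. br q ^ b * X q) q = c * (Omega ^^ (a - b)) X q"
proof (induction a arbitrary: b X D)
  case 0
  then show ?case by (intro exI[of _ 1]) simp
next
  case (Suc a)
  show ?case
  proof (cases b)
    case 0
    then show ?thesis by (intro exI[of _ 1]) simp
  next
    case (Suc b')
    have X: "X \<in> PP" by fact
    define k where "k = real (Suc b') * (real (Suc b') + 1 + D)"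
    have D0: "0 \<le> D" using Suc.prems(4) by (smt (verit) of_nat_0_le_iff)
    have k: "k > 0" unfolding k_def using D0 by (simp add: add_pos_nonneg)
    have "(Omega ^^ Suc a) (\<lambda>q. br q ^ b * X q)
        = (Omega ^^ a) (\<lambda>q. k * (br q ^ b' * X q) + br q ^ Suc b' * Omega X q)"
      unfolding Suc funpow_Suc_right comp_def Omega_brpow_hom[OF X Suc.prems(2)] k_def ..
    also have "\<dots> = (\<lambda>q. k * (Omega ^^ a) (\<lambda>q. br q ^ b' * X q) q + (Omega ^^ a) (\<lambda>q. br q ^ Suc b' * Omega X q) q)"
      using X by (simp add: funpow_lin)
    finally have eq: "(Omega ^^ Suc a) (\<lambda>q. br q ^ b * X q) = \<dots>" .
    obtain c1 where c1: "c1 > 0" "\<forall>q. diag q \<longrightarrow> (Omega ^^ a) (\<lambda>q. br q ^ b' * X q) q = c1 * (Omega ^^ (a - b')) X q"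
      using Suc.IH[OF X Suc.prems(2), of b'] Suc.prems(3,4) \<open>b = Suc b'\<close> by auto
    have ab: "a - b' = Suc a - b" using Suc.prems(3) \<open>b = Suc b'\<close> by simp
    show ?thesis
    proof (cases "Suc b' \<le> a")
      case True
      have hom2: "Eu (Omega X) = (\<lambda>q. (D - 2) * Omega X q)" by (rule Eu_Omega_hom[OF X Suc.prems(2)])
      have le2: "2 * real (a - Suc b') \<le> D - 2" using Suc.prems(4) True \<open>b = Suc b'\<close>
        by (simp add: of_nat_diff)
      obtain c2 where c2: "c2 > 0" "\<forall>q. diag q \<longrightarrow> (Omega ^^ a) (\<lambda>q. br q ^ Suc b' * Omega X q) q
          = c2 * (Omega ^^ (a - Suc b')) (Omega X) q"
        using Suc.IH[OF Omega_PP[OF X] hom2 True le2] by auto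
      have fp: "(Omega ^^ (a - Suc b')) (Omega X) = (Omega ^^ (Suc a - b)) X"
      proof -
        have "Suc a - b = Suc (a - Suc b')" using True \<open>b = Suc b'\<close> by simp
        then show ?thesis by (simp only: funpow_Suc_right comp_def)
      qed
      show ?thesis
        apply (rule exI[of _ "k * c1 + c2"])
        using c1 c2 k fp ab eq by (auto simp: algebra_simps intro: add_pos_pos)
    next
      case False
      have z: "\<forall>q. diag q \<longrightarrow> (Omega ^^ a) (\<lambda>q. br q ^ Suc b' * Omega X q) q = 0"
        using lemmaC[OF Omega_PP[OF X], of a "Suc b'"] False by (simp del: power_Suc)
      show ?thesis
        apply (rule exI[of _ "k * c1"])
        using c1 z k ab eq by auto
    qed
  qed
qed

lemma pd_pow_var: "pd v (\<lambda>q. q w ^ n) = (\<lambda>q. if v = w then real n * q w ^ (n - 1) else 0)"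
proof (rule ext)
  fix q
  show "pd v (\<lambda>q. q w ^ n) q = (if v = w then real n * q w ^ (n - 1) else 0)"
  proof (cases "v = w")
    case True
    have h: "((\<lambda>t. (q(v := t)) w ^ n) has_real_derivative real n * q w ^ (n - 1)) (at (q v))"
      using True DERIV_pow[of n "q v"] by simp
    then show ?thesis using pd_eq[OF h] True by simp
  next
    case False
    have h: "((\<lambda>t. (q(v := t)) w ^ n) has_real_derivative 0) (at (q v))"
      using False by simp
    then show ?thesis using pd_eq[OF h] False by simp
  qed
qed

definition mon :: "real \<Rightarrow> nat \<Rightarrow> nat \<Rightarrow> nat \<Rightarrow> nat \<Rightarrow> pfun" where
  "mon c k0 k1 k2 k3 = (\<lambda>q. c * q X0 ^ k0 * q X1 ^ k1 * q Y0 ^ k2 * q Y1 ^ k3)"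

lemma mono_PP[simp]: "mon c k0 k1 k2 k3 \<in> PP"
  unfolding mon_def by simp

lemma pd_mono:
  "pd X0 (mon c k0 k1 k2 k3) = mon (c * real k0) (k0 - 1) k1 k2 k3"
  "pd X1 (mon c k0 k1 k2 k3) = mon (c * real k1) k0 (k1 - 1) k2 k3"
  "pd Y0 (mon c k0 k1 k2 k3) = mon (c * real k2) k0 k1 (k2 - 1) k3"
  "pd Y1 (mon c k0 k1 k2 k3) = mon (c * real k3) k0 k1 k2 (k3 - 1)"
  unfolding mon_def by (simp_all add: pd_mult pd_pow_var algebra_simps)

lemma Omega_mono:
  "Omega (mon c k0 k1 k2 k3) = (\<lambda>q. mon (c * real k0 * real k3) (k0 - 1) k1 k2 (k3 - 1) q
       - mon (c * real k1 * real k2) k0 (k1 - 1) (k2 - 1) k3 q)"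
  unfolding Omega_def pd_mono by (simp add: algebra_simps)

definition cc :: "nat \<Rightarrow> nat \<Rightarrow> nat \<Rightarrow> real" where
  "cc m e i = (\<Prod>k<i. real (m - k) * real (e - k))"

definition TT :: "nat \<Rightarrow> nat \<Rightarrow> nat \<Rightarrow> nat \<Rightarrow> pfun" where
  "TT m e i j = mon (cc m e i * cc m e j) (m - i) (e - j) (m - j) (e - i)"

lemma TT_PP[simp]: "TT m e i j \<in> PP" unfolding TT_def by simp

lemma Omega_TT: "Omega (TT m e i j) = (\<lambda>q. TT m e (Suc i) j q - TT m e i (Suc j) q)"
proof -
  have cS: "cc m e (Suc k) = cc m e k * (real (m-k) * real (e-k))" for k by (simp add: cc_def)
  have 1: "TT m e (Suc i) j = mon (cc m e i * cc m e j * real (m-i) * real (e-i)) (m-i-1) (e-j) (m-j) (e-i-1)"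
    unfolding TT_def cS by (simp add: mult_ac)
  have 2: "TT m e i (Suc j) = mon (cc m e i * cc m e j * real (e-j) * real (m-j)) (m-i) (e-j-1) (m-j-1) (e-i)"
    unfolding TT_def cS by (simp add: mult_ac)
  show ?thesis unfolding 1 2 unfolding TT_def Omega_mono by (simp add: mult_ac)
qed

lemma binom_step:
  fixes t :: "nat \<Rightarrow> nat \<Rightarrow> real"
  shows "(\<Sum>i\<le>n. real (n choose i) * (-1)^(n-i) * (t (Suc i) (n-i) - t i (Suc (n-i))))
       = (\<Sum>i\<le>Suc n. real (Suc n choose i) * (-1)^(Suc n - i) * t i (Suc n - i))"
proof -
  define f where "f i = (-1::real)^(Suc n - i) * t i (Suc n - i)" for i
  have r1: "(\<Sum>i\<le>Suc n. real (Suc n choose i) * (-1)^(Suc n - i) * t i (Suc n - i))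
      = f 0 + (\<Sum>i\<le>n. real (n choose i) * f (Suc i)) + (\<Sum>i\<le>n. real (n choose Suc i) * f (Suc i))"
    unfolding sum.atMost_Suc_shift f_def by (simp add: sum.distrib distrib_right mult.assoc)
  have r2: "(\<Sum>i\<le>Suc n. real (n choose i) * f i) = f 0 + (\<Sum>i\<le>n. real (n choose Suc i) * f (Suc i))"
    unfolding sum.atMost_Suc_shift by simp
  have r3: "(\<Sum>i\<le>Suc n. real (n choose i) * f i) = (\<Sum>i\<le>n. real (n choose i) * f i)"
    by simp
  have l1: "(\<Sum>i\<le>n. real (n choose i) * f (Suc i)) = (\<Sum>i\<le>n. real (n choose i) * (-1)^(n-i) * t (Suc i) (n-i))"
    unfolding f_def by (simp add: mult.assoc)
  have l2: "(\<Sum>i\<le>n. real (n choose i) * f i) = - (\<Sum>i\<le>n. real (n choose i) * (-1)^(n-i) * t i (Suc (n-i)))"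
    unfolding f_def sum_negf[symmetric]
    by (rule sum.cong) (auto simp: Suc_diff_le)
  show ?thesis
    unfolding r1 using r2 r3 l1 l2 by (simp add: sum_subtractf right_diff_distrib)
qed

lemma binom_Omega:
  "(Omega ^^ n) (TT m e 0 0) = (\<lambda>q. \<Sum>i\<le>n. real (n choose i) * (-1)^(n-i) * TT m e i (n - i) q)"
proof (induction n)
  case 0
  then show ?case by simp
next
  case (Suc n)
  have "(Omega ^^ Suc n) (TT m e 0 0) = Omega (\<lambda>q. \<Sum>i\<le>n. (real (n choose i) * (-1)^(n-i)) * TT m e i (n - i) q)"
    using Suc by (simp add: mult.assoc)
  also have "\<dots> = (\<lambda>q. \<Sum>i\<le>n. (real (n choose i) * (-1)^(n-i)) * Omega (TT m e i (n - i)) q)"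
    by (rule Omega_sum) simp
  also have "\<dots> = (\<lambda>q. \<Sum>i\<le>n. real (n choose i) * (-1)^(n-i) * (TT m e (Suc i) (n - i) q - TT m e i (Suc (n - i)) q))"
    by (simp add: Omega_TT mult.assoc)
  also have "\<dots> = (\<lambda>q. \<Sum>i\<le>Suc n. real (Suc n choose i) * (-1)^(Suc n-i) * TT m e i (Suc n - i) q)"
    by (rule ext, rule binom_step[where t = "\<lambda>i j. TT m e i j q" for q])
  finally show ?case .
qed

definition slice :: "(var \<Rightarrow> real) \<Rightarrow> bool" where
  "slice q \<longleftrightarrow> q A0 = 1 \<and> q A1 = 0 \<and> q B0 = 0 \<and> q B1 = 1"

lemma pd_local:
  assumes "\<forall>q. slice q \<longrightarrow> f q = g q" "slice q" "v \<in> {X0, X1, Y0, Y1}"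
  shows "pd v f q = pd v g q"
proof -
  have "(\<lambda>t. f (q(v := t))) = (\<lambda>t. g (q(v := t)))"
  proof
    fix t
    have "slice (q(v := t))" using assms(2,3) unfolding slice_def by auto
    then show "f (q(v := t)) = g (q(v := t))" using assms(1) by blast
  qed
  then show ?thesis unfolding pd_def by simp
qed

lemma Omega_local:
  assumes "\<forall>q. slice q \<longrightarrow> f q = g q"
  shows "\<forall>q. slice q \<longrightarrow> Omega f q = Omega g q"
proof (intro allI impI)
  fix q assume q: "slice q"
  have i1: "\<forall>q. slice q \<longrightarrow> pd Y1 f q = pd Y1 g q" using pd_local[OF assms] by simp
  have i2: "\<forall>q. slice q \<longrightarrow> pd Y0 f q = pd Y0 g q" using pd_local[OF assms] by simp
  show "Omega f q = Omega g q" unfolding Omega_def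
    using pd_local[OF i1 q, of X0] pd_local[OF i2 q, of X1] by simp
qed

lemma funpow_local:
  assumes "\<forall>q. slice q \<longrightarrow> f q = g q"
  shows "\<forall>q. slice q \<longrightarrow> (Omega ^^ n) f q = (Omega ^^ n) g q"
  by (induction n) (use assms Omega_local in auto)

definition GG :: "nat \<Rightarrow> nat \<Rightarrow> pfun" where
  "GG m e = (\<lambda>q. a_x q ^ m * a_y q ^ m * b_x q ^ e * b_y q ^ e)"

lemma lin_PP[simp]: "a_x \<in> PP" "a_y \<in> PP" "b_x \<in> PP" "b_y \<in> PP"
  unfolding a_x_def a_y_def b_x_def b_y_def by simp_all

lemma GG_PP[simp]: "GG m e \<in> PP"
  unfolding GG_def by simp

lemma Eu_lin: "Eu a_x = (\<lambda>q. 1 * a_x q)" "Eu a_y = (\<lambda>q. 1 * a_y q)"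
   "Eu b_x = (\<lambda>q. 1 * b_x q)" "Eu b_y = (\<lambda>q. 1 * b_y q)"
  unfolding Eu_def a_x_def a_y_def b_x_def b_y_def by (simp_all add: pd_add pd_mult algebra_simps)

lemma Eu_GG: "Eu (GG m e) = (\<lambda>q. (2 * real m + 2 * real e) * GG m e q)"
proof -
  note P = Eu_pow[OF lin_PP(1) Eu_lin(1)] Eu_pow[OF lin_PP(2) Eu_lin(2)]
     Eu_pow[OF lin_PP(3) Eu_lin(3)] Eu_pow[OF lin_PP(4) Eu_lin(4)]
  show ?thesis unfolding GG_def
    by (simp add: Eu_mult P del: power_Suc) (rule ext, simp add: algebra_simps)
qed

lemma Fpoly_eq: "Fpoly r e p = (\<lambda>q. br q ^ (2 * p) * GG (r * e - 2 * p) e q)"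
  unfolding Fpoly_def GG_def by (simp add: mult_ac)

lemma GG_slice: "\<forall>q. slice q \<longrightarrow> GG m e q = TT m e 0 0 q"
  unfolding slice_def GG_def TT_def mon_def cc_def a_x_def a_y_def b_x_def b_y_def by auto

lemma cc_zero: "e < i \<Longrightarrow> cc m e i = 0"
  unfolding cc_def by (rule prod_zero) (auto intro: bexI[of _ e])

lemma cc_pos: "e \<le> m \<Longrightarrow> cc m e e > 0"
  unfolding cc_def by (rule prod_pos) auto

definition q0 :: "var \<Rightarrow> real" where "q0 v = (if v = A1 \<or> v = B0 then 0 else 1)"

lemma TT_q0: "TT m e i j q0 = cc m e i * cc m e j"
  unfolding TT_def mon_def q0_def by simp

lemma Omega_GG_q0:
  assumes "e \<le> m"
  shows "(Omega ^^ (2 * e)) (GG m e) q0 \<noteq> 0"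
proof -
  have s: "slice q0" unfolding slice_def q0_def by simp
  have "(Omega ^^ (2 * e)) (GG m e) q0 = (Omega ^^ (2 * e)) (TT m e 0 0) q0"
    using funpow_local[OF GG_slice] s by blast
  also have "\<dots> = (\<Sum>i\<le>2*e. real (2*e choose i) * (-1)^(2*e-i) * (cc m e i * cc m e (2*e - i)))"
    unfolding binom_Omega TT_q0 ..
  also have "\<dots> = real (2*e choose e) * (-1)^(2*e-e) * (cc m e e * cc m e (2*e - e))"
  proof -
    have "(\<Sum>i\<in>{..2*e} - {e}. real (2*e choose i) * (-1)^(2*e-i) * (cc m e i * cc m e (2*e - i))) = 0"
    proof (rule sum.neutral, rule ballI)
      fix i assume "i \<in> {..2*e} - {e}"
      then have "e < i \<or> e < 2*e - i" by auto
      then show "real (2*e choose i) * (-1)^(2*e-i) * (cc m e i * cc m e (2*e - i)) = 0"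
        using cc_zero by auto
    qed
    then show ?thesis by (simp add: sum.remove[of "{..2*e}" e])
  qed
  also have "\<dots> \<noteq> 0" using cc_pos[OF assms] by simp
  finally show ?thesis .
qed

theorem mainTheorem9:
  fixes r e p' :: nat
  assumes "r \<ge> 2" and "e \<ge> 1" and "2 * p' \<le> (r + 1) * e"
  shows "\<exists>p::nat. 2 * p \<le> r * e \<and>
           (\<exists>q. q Y0 = q X0 \<and> q Y1 = q X1 \<and> (Omega ^^ (2 * p')) (Fpoly r e p) q \<noteq> 0)"
proof (cases "2 * p' \<le> r * e")
  case True
  define m where "m = r * e - 2 * p'"
  obtain c where c: "c > 0" "\<forall>q. diag q \<longrightarrow> (Omega ^^ (2*p')) (\<lambda>q. br q ^ (2*p') * GG m e q) q
       = c * (Omega ^^ (2*p' - 2*p')) (GG m e) q"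
    using lemmaB[OF GG_PP[of m e] Eu_GG[of m e], of "2*p'" "2*p'"] by auto
  define q1 :: "var \<Rightarrow> real" where "q1 = (\<lambda>_. 1)"
  have d: "diag q1" unfolding diag_def q1_def by simp
  have g: "GG m e q1 \<noteq> 0" unfolding GG_def q1_def a_x_def a_y_def b_x_def b_y_def by simp
  show ?thesis
    apply (rule exI[of _ p'])
    using True c d g unfolding Fpoly_eq m_def[symmetric]
    by (auto simp: diag_def intro!: exI[of _ q1])
next
  case False
  define p where "p = p' - e"
  define m where "m = r * e - 2 * p"
  have re: "(r + 1) * e = r * e + e" by simp
  have pe: "e \<le> p'" using False assms(1) 
    by (metis add_leD2 assms(2) le_trans mult_le_mono1 nat_le_linear nat_mult_le_cancel_disj not_le mult_2 one_add_one trans_le_add1 mult.commute)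
  have hp: "2 * p \<le> r * e" using assms(3) re pe unfolding p_def by linarith
  have em: "e \<le> m" using assms(3) re pe False unfolding m_def p_def by linarith
  have ab: "2 * p' - 2 * p = 2 * e" using pe unfolding p_def by simp
  have D: "2 * real (2 * p' - 2 * p) \<le> 2 * real m + 2 * real e" using em ab by simp
  obtain c where c: "c > 0" "\<forall>q. diag q \<longrightarrow> (Omega ^^ (2*p')) (\<lambda>q. br q ^ (2*p) * GG m e q) q
       = c * (Omega ^^ (2*p' - 2*p)) (GG m e) q"
    using lemmaB[OF GG_PP[of m e] Eu_GG[of m e], of "2*p" "2*p'"] D unfolding p_def by auto
  have d: "diag q0" unfolding diag_def q0_def by simp
  have g: "(Omega ^^ (2*p' - 2*p)) (GG m e) q0 \<noteq> 0" unfolding ab by (rule Omega_GG_q0[OF em])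
  show ?thesis
    apply (rule exI[of _ p])
    using hp c d g unfolding Fpoly_eq m_def[symmetric]
    by (auto simp: diag_def intro!: exI[of _ q0])
qed

end
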